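(* Let $f:[-1,1]\to\mathbb{R}$ be convex and symmetric ($f(x)=f(-x)$). Define, for $d_1,d_2\in[-1,1]$, $$f^+(d_1,d_2)=\frac{1+d_1d_2}{2}\,f\!\left(\frac{d_1+d_2}{1+d_1d_2}\right)+\frac{1-d_1d_2}{2}\,f\!\left(\frac{d_1-d_2}{1-d_1d_2}\right).$$ Then $f^+$ is convex and symmetric in each of its variables, i.e. for each fixed $d_2$ the map $d_1\mapsto f^+(d_1,d_2)$ is convex on $[-1,1]$ with $f^+(d_1,d_2)=f^+(-d_1,d_2)$, and likewise in $d_2$ for fixed $d_1$.
   Context: In the definition of $f^+$, a term whose prefactor $1\pm d_1d_2$ equals $0$ is taken to be $0$. *)

theory Defs
  imports "HOL-Analysis.Analysis"
begin

definition f_plus :: "(real \<Rightarrow> real) \<Rightarrow> real \<Rightarrow> real \<Rightarrow> real" where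
  "f_plus f d1 d2 =
     (if 1 + d1 * d2 = 0 then 0
      else (1 + d1 * d2) / 2 * f ((d1 + d2) / (1 + d1 * d2)))
   + (if 1 - d1 * d2 = 0 then 0
      else (1 - d1 * d2) / 2 * f ((d1 - d2) / (1 - d1 * d2)))"

end

theory Submission
  imports Defs
begin

lemma persp:
  fixes f :: "real \<Rightarrow> real"
  assumes conv: "convex_on {-1..1} f"
    and pos: "\<And>d. d \<in> {-1..1} \<Longrightarrow> p + q*d > 0 \<and> \<bar>r + s*d\<bar> \<le> p + q*d"
  shows "convex_on {-1..1} (\<lambda>d. (p+q*d) * f ((r+s*d)/(p+q*d)))"
proof (rule convex_onI)
  fix u a b :: real
  assume u: "u > 0" "u < 1" and a: "a \<in> {-1..1}" and b: "b \<in> {-1..1}"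
  define d where "d = (1-u)*a + u*b"
  have d: "d \<in> {-1..1}"
  proof -
    have "(1-u)*a \<ge> (1-u)*(-1)" "u*b \<ge> u*(-1)" "(1-u)*a \<le> (1-u)*1" "u*b \<le> u*1"
      using u a b by (intro mult_left_mono; simp)+
    thus ?thesis unfolding d_def by auto
  qed
  define ta where "ta = p+q*a"
  define tb where "tb = p+q*b"
  define td where "td = p+q*d"
  define xa where "xa = r+s*a"
  define xb where "xb = r+s*b"
  define xd where "xd = r+s*d"
  have ta: "ta > 0" "\<bar>xa\<bar> \<le> ta" using pos[OF a] ta_def xa_def by auto
  have tb: "tb > 0" "\<bar>xb\<bar> \<le> tb" using pos[OF b] tb_def xb_def by auto
  have tdv: "td = (1-u)*ta + u*tb" unfolding td_def ta_def tb_def d_def by algebra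
  have xdv: "xd = (1-u)*xa + u*xb" unfolding xd_def xa_def xb_def d_def by algebra
  have td: "td > 0" using tdv ta tb u by (smt (verit) mult_pos_pos)
  define m where "m = u*tb/td"
  have pp: "(1-u)*ta > 0" "u*tb > 0" using u ta tb by auto
  have m0: "m \<ge> 0" "m \<le> 1" unfolding m_def using pp td tdv
    by (auto simp: field_simps)
  have one_m: "1 - m = (1-u)*ta/td" unfolding m_def using td tdv by (auto simp: field_simps)
  have xaa: "xa/ta \<in> {-1..1}" using ta by (auto simp: field_simps abs_le_iff)
  have xbb: "xb/tb \<in> {-1..1}" using tb by (auto simp: field_simps abs_le_iff)
  have eq: "xd/td = (1-m)*(xa/ta) + m*(xb/tb)"
  proof -
    have "(1-m)*(xa/ta) + m*(xb/tb) = ((1-u)*xa + u*xb)/td"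
      unfolding one_m unfolding m_def using ta tb td by (simp add: field_simps)
    thus ?thesis using xdv by simp
  qed
  have "f (xd/td) \<le> (1-m) * f (xa/ta) + m * f (xb/tb)"
    using convex_onD[OF conv m0 xaa xbb] eq by simp
  hence "td * f (xd/td) \<le> td * ((1-m) * f (xa/ta) + m * f (xb/tb))"
    using td by (simp add: mult_left_mono)
  also have "\<dots> = (1-u) * (ta * f (xa/ta)) + u * (tb * f (xb/tb))"
    unfolding one_m unfolding m_def using td by (simp add: field_simps)
  finally show "(p + q * ((1 - u) *\<^sub>R a + u *\<^sub>R b)) * f ((r + s * ((1 - u) *\<^sub>R a + u *\<^sub>R b)) / (p + q * ((1 - u) *\<^sub>R a + u *\<^sub>R b)))
         \<le> (1 - u) * ((p + q * a) * f ((r + s * a) / (p + q * a))) + u * ((p + q * b) * f ((r + s * b) / (p + q * b)))"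
    unfolding td_def xd_def d_def ta_def tb_def xa_def xb_def by simp
qed (simp add: convex_real_interval)

lemma convex_on_cong':
  assumes "convex_on S f" "\<And>x. x \<in> S \<Longrightarrow> g x = f x"
  shows "convex_on S g"
proof -
  have cs: "convex S" using assms(1) convex_on_def by blast
  show ?thesis
  proof (rule convex_onI[OF _ cs])
    fix t x y assume h: "(0::real) < t" "t < 1" "x \<in> S" "y \<in> S"
    have "(1 - t) *\<^sub>R x + t *\<^sub>R y \<in> S" using cs h
      by (simp add: convex_alt)
    thus "g ((1 - t) *\<^sub>R x + t *\<^sub>R y) \<le> (1 - t) * g x + t * g y"
      using convex_onD[OF assms(1), of t x y] h assms(2) by simp
  qed
qed

lemma bnd:
  fixes d1 d2 :: real
  assumes "d1 \<in> {-1..1}" "d2 \<in> {-1..1}"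
  shows "\<bar>d1 + d2\<bar> \<le> 1 + d1*d2" "\<bar>d1 - d2\<bar> \<le> 1 - d1*d2"
proof -
  have "(1-d1)*(1-d2) \<ge> 0" "(1+d1)*(1+d2) \<ge> 0" "(1-d1)*(1+d2) \<ge> 0" "(1+d1)*(1-d2) \<ge> 0"
    using assms by (auto intro: mult_nonneg_nonneg)
  thus "\<bar>d1 + d2\<bar> \<le> 1 + d1*d2" "\<bar>d1 - d2\<bar> \<le> 1 - d1*d2"
    by (auto simp: algebra_simps abs_le_iff)
qed

lemma in11: "\<bar>x\<bar> \<le> (t::real) \<Longrightarrow> x / t \<in> {-1..1}"
  by (cases "t = 0") (auto simp: field_simps abs_le_iff)

lemma swap:
  assumes sym: "\<And>x. x \<in> {-1..1} \<Longrightarrow> f x = f (- x)"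
    and "d1 \<in> {-1..1}" "d2 \<in> {-1..1}"
  shows "f_plus f d1 d2 = f_plus f d2 d1"
proof -
  have "f ((d1 - d2) / (1 - d1 * d2)) = f ((d2 - d1) / (1 - d2 * d1))"
    using sym[OF in11[OF bnd(2)[OF assms(2,3)]]] by (simp add: algebra_simps minus_divide_left)
  thus ?thesis unfolding f_plus_def by (simp add: algebra_simps)
qed

lemma sym1:
  assumes sym: "\<And>x. x \<in> {-1..1} \<Longrightarrow> f x = f (- x)"
    and "d1 \<in> {-1..1}" "d2 \<in> {-1..1}"
  shows "f_plus f d1 d2 = f_plus f (-d1) d2"
proof -
  have 1: "f ((d1 - d2) / (1 - d1 * d2)) = f ((-d1 + d2) / (1 - d1 * d2))"
    using sym[OF in11[OF bnd(2)[OF assms(2,3)]]] by (simp add: algebra_simps minus_divide_left)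
  have 2: "f ((d1 + d2) / (1 + d1 * d2)) = f ((-d1 - d2) / (1 + d1 * d2))"
    using sym[OF in11[OF bnd(1)[OF assms(2,3)]]] by (simp add: algebra_simps minus_divide_left)
  show ?thesis unfolding f_plus_def using 1 2 by (simp add: algebra_simps)
qed

lemma affine_conv: "convex_on {-1..1} (\<lambda>d::real. (1+d)/2*A + (1-d)/2*B)"
  apply (rule convex_onI)
   apply (simp add: field_simps)
  apply (simp add: convex_real_interval)
  done

lemma conv1:
  fixes f :: "real \<Rightarrow> real"
  assumes conv: "convex_on {-1..1} f"
    and d2: "d2 \<in> {-1..1}"
  shows "convex_on {-1..1} (\<lambda>d1. f_plus f d1 d2)"
proof (cases "\<bar>d2\<bar> = 1")
  case True
  show ?thesis
  proof (rule convex_on_cong'[OF affine_conv[of "f 1" "f (-1)"]])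
    fix x :: real assume x: "x \<in> {-1..1}"
    show "f_plus f x d2 = (1+x)/2*f 1 + (1-x)/2*f (-1)"
    proof (cases "d2 = 1")
      case True
      have a: "x \<noteq> -1 \<Longrightarrow> (x+1)/(1+x) = 1" by (simp add: field_simps)
      have b: "x \<noteq> 1 \<Longrightarrow> (x-1)/(1-x) = -1" by (simp add: field_simps)
      show ?thesis unfolding f_plus_def True using a b
        by (cases "x = 1"; cases "x = -1") (auto simp: algebra_simps)
    next
      case False
      hence T: "d2 = -1" using \<open>\<bar>d2\<bar> = 1\<close> by auto
      have a: "x \<noteq> 1 \<Longrightarrow> (x-1)/(1-x) = -1" by (simp add: field_simps)
      have b: "x \<noteq> -1 \<Longrightarrow> (x+1)/(1+x) = 1" by (simp add: field_simps)
      show ?thesis unfolding f_plus_def T using a b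
        by (cases "x = 1"; cases "x = -1") (auto simp: algebra_simps)
    qed
  qed
next
  case False
  hence lt: "\<bar>d2\<bar> < 1" using d2 by auto
  have pos: "\<bar>d2 * d\<bar> < 1" if "d \<in> {-1..1}" for d
  proof -
    have "\<bar>d2\<bar> * \<bar>d\<bar> \<le> \<bar>d2\<bar> * 1" using that by (intro mult_left_mono) auto
    thus ?thesis using lt by (simp add: abs_mult)
  qed
  have c1: "convex_on {-1..1} (\<lambda>d. (1 + d2*d) * f ((d2 + 1*d)/(1 + d2*d)))"
  proof (rule persp[OF conv])
    fix d :: real assume d: "d \<in> {-1..1}"
    show "1 + d2*d > 0 \<and> \<bar>d2 + 1*d\<bar> \<le> 1 + d2*d" using pos[OF d] bnd(1)[OF d d2]
      by (auto simp: algebra_simps abs_less_iff)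
  qed
  have c2: "convex_on {-1..1} (\<lambda>d. (1 + (-d2)*d) * f ((-d2 + 1*d)/(1 + (-d2)*d)))"
  proof (rule persp[OF conv])
    fix d :: real assume d: "d \<in> {-1..1}"
    show "1 + (-d2)*d > 0 \<and> \<bar>-d2 + 1*d\<bar> \<le> 1 + (-d2)*d" using pos[OF d] bnd(2)[OF d d2]
      by (auto simp: algebra_simps abs_less_iff)
  qed
  have c: "convex_on {-1..1} (\<lambda>d. 1/2 * ((1 + d2*d) * f ((d2 + 1*d)/(1 + d2*d)))
     + 1/2 * ((1 + (-d2)*d) * f ((-d2 + 1*d)/(1 + (-d2)*d))))"
    using c1 c2 by (intro convex_on_add convex_on_cmul) auto
  show ?thesis
  proof (rule convex_on_cong'[OF c])
    fix x :: real assume x: "x \<in> {-1..1}"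
    have "1 + x*d2 \<noteq> 0" "1 - x*d2 \<noteq> 0" using pos[OF x] by (auto simp: algebra_simps abs_less_iff)
    thus "f_plus f x d2 = 1/2 * ((1 + d2*x) * f ((d2 + 1*x)/(1 + d2*x)))
     + 1/2 * ((1 + (-d2)*x) * f ((-d2 + 1*x)/(1 + (-d2)*x)))"
      unfolding f_plus_def by (simp add: algebra_simps) (simp add: field_simps)
  qed
qed

theorem lemma1:
  fixes f :: "real \<Rightarrow> real"
  assumes conv: "convex_on {-1..1} f"
    and sym: "\<And>x. x \<in> {-1..1} \<Longrightarrow> f x = f (- x)"
  shows "(\<forall>d2\<in>{-1..1}. convex_on {-1..1} (\<lambda>d1. f_plus f d1 d2)
            \<and> (\<forall>d1\<in>{-1..1}. f_plus f d1 d2 = f_plus f (- d1) d2))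
       \<and> (\<forall>d1\<in>{-1..1}. convex_on {-1..1} (\<lambda>d2. f_plus f d1 d2)
            \<and> (\<forall>d2\<in>{-1..1}. f_plus f d1 d2 = f_plus f d1 (- d2)))"
proof (intro conjI ballI)
  fix d2 :: real assume d2: "d2 \<in> {-1..1}"
  show "convex_on {-1..1} (\<lambda>d1. f_plus f d1 d2)" using conv1[OF conv d2] .
  fix d1 :: real assume d1: "d1 \<in> {-1..1}"
  show "f_plus f d1 d2 = f_plus f (- d1) d2" using sym1[of f, OF sym d1 d2] .
next
  fix d1 :: real assume d1: "d1 \<in> {-1..1}"
  show "convex_on {-1..1} (\<lambda>d2. f_plus f d1 d2)"
  proof (rule convex_on_cong'[OF conv1[OF conv d1]])
    fix x :: real assume x: "x \<in> {-1..1}"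
    show "f_plus f d1 x = f_plus f x d1" using swap[of f d1 x, OF sym d1 x] .
  qed
  fix d2 :: real assume d2: "d2 \<in> {-1..1}"
  have m: "-d2 \<in> {-1..1}" using d2 by auto
  show "f_plus f d1 d2 = f_plus f d1 (- d2)"
    using swap[of f, OF sym d1 d2] sym1[of f, OF sym d2 d1] swap[of f, OF sym m d1] by simp
qed

end
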